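(* For every measurable nest $\{E_k\}_{k\ge1}$ there exist a measurable nest $\{\hat E_k\}_{k\ge1}$ and functions $\{\chi_k\}_{k\ge1}\subset\mathbb D$ such that for every $k$: $\hat E_k\subset E_k$, $0\le\chi_k\le1$ on $E$, $\chi_k=1$ on $\hat E_k$, and $\chi_k=0$ on $E\setminus E_k$ ($\mu$-a.e.).
   Context: $(E,\mathcal B,\mu)$ is a $\sigma$-finite measure space, $H$ a real separable Hilbert space, $\mathbb D$ a dense subspace of $L^2(\mu)$ and $D:\mathbb D\to L^2(\mu;H)$ a closed linear operator with the derivation property (for $f_1,\dots,f_m\in\mathbb D$ and $F\in C^1(\mathbb R^m)$ with bounded first derivatives and $F(0)=0$: $F(f_1,\dots,f_m)\in\mathbb D$, $DF(f_1,\dots,f_m)=\sum_j\partial_jF(\cdots)Df_j$). $\mathbb D$ carries the Hilbert norm $\mathcal E^0_1(f)^{1/2}=(\frac12\|Df\|_2^2+\|f\|_2^2)^{1/2}$. $\mathbb D_A=\{f\in\mathbb D:f=0\ \mu\text{-a.e. on }E\setminus A\}$. A measurable nest is an increasing sequence $\{E_k\}$ in $\mathcal B$ such that (i) for every $k$ there is $h_k\in\mathbb D$ with $h_k\ge1$ a.e. on $E_k$ and (ii) $\bigcup_k\mathbb D_{E_k}$ is dense in $\mathbb D$. *)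

theory Defs
  imports "HOL-Analysis.Analysis"
begin

text \<open>Elements of L^2(mu) are represented by measurable real functions, elements of
  L^2(mu;H) by measurable H-valued functions; equality in L^2 is equality mu-a.e.
  The domain Dom is a set of representatives (closed under a.e. modification).\<close>

definition sq_int :: "'a measure \<Rightarrow> ('a \<Rightarrow> real) \<Rightarrow> bool" where
  "sq_int M f \<longleftrightarrow> f \<in> borel_measurable M \<and> integrable M (\<lambda>x. (f x)\<^sup>2)"

definition vsq_int :: "'a measure \<Rightarrow> ('a \<Rightarrow> 'h::{real_inner,banach,second_countable_topology}) \<Rightarrow> bool" where
  "vsq_int M G \<longleftrightarrow> G \<in> borel_measurable M \<and> integrable M (\<lambda>x. (norm (G x))\<^sup>2)"

definition vec_of :: "nat \<Rightarrow> (nat \<Rightarrow> 'a \<Rightarrow> real) \<Rightarrow> 'a \<Rightarrow> (nat \<Rightarrow> real)" where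
  "vec_of m fs x = (\<lambda>j. if j < m then fs j x else 0)"

definition Rm :: "nat \<Rightarrow> (nat \<Rightarrow> real) set" where
  "Rm m = {x. \<forall>i\<ge>m. x i = 0}"

definition C1_bdd :: "nat \<Rightarrow> ((nat \<Rightarrow> real) \<Rightarrow> real) \<Rightarrow> (nat \<Rightarrow> (nat \<Rightarrow> real) \<Rightarrow> real) \<Rightarrow> bool" where
  "C1_bdd m F dF \<longleftrightarrow>
     (\<forall>x\<in>Rm m. \<forall>j<m. ((\<lambda>t. F (x(j := t))) has_real_derivative dF j x) (at (x j))) \<and>
     (\<forall>j<m. continuous_on (Rm m) (dF j)) \<and>
     (\<forall>j<m. \<exists>B. \<forall>x\<in>Rm m. \<bar>dF j x\<bar> \<le> B)"

definition L2dist2 :: "'a measure \<Rightarrow> ('a \<Rightarrow> real) \<Rightarrow> ('a \<Rightarrow> real) \<Rightarrow> real" where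
  "L2dist2 M f g = integral\<^sup>L M (\<lambda>x. (f x - g x)\<^sup>2)"

definition L2Hdist2 :: "'a measure \<Rightarrow> ('a \<Rightarrow> 'h::{real_inner,banach,second_countable_topology}) \<Rightarrow> ('a \<Rightarrow> 'h) \<Rightarrow> real" where
  "L2Hdist2 M F G = integral\<^sup>L M (\<lambda>x. (norm (F x - G x))\<^sup>2)"

definition standing ::
  "'a measure \<Rightarrow> ('a \<Rightarrow> real) set \<Rightarrow> (('a \<Rightarrow> real) \<Rightarrow> ('a \<Rightarrow> 'h::{real_inner,banach,second_countable_topology})) \<Rightarrow> bool" where
  "standing M Dom D \<longleftrightarrow>
     sigma_finite_measure M \<and>
     (\<forall>f\<in>Dom. sq_int M f \<and> vsq_int M (D f)) \<and>
     \<comment> \<open>Dom is a set of L^2 representatives, D well defined on classes\<close>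
     (\<forall>f\<in>Dom. \<forall>g. g \<in> borel_measurable M \<and> (AE x in M. f x = g x) \<longrightarrow>
        g \<in> Dom \<and> (AE x in M. D g x = D f x)) \<and>
     \<comment> \<open>linear subspace, D linear\<close>
     (\<lambda>x. 0) \<in> Dom \<and>
     (\<forall>f\<in>Dom. \<forall>g\<in>Dom. (\<lambda>x. f x + g x) \<in> Dom \<and>
        (AE x in M. D (\<lambda>x. f x + g x) x = D f x + D g x)) \<and>
     (\<forall>f\<in>Dom. \<forall>c::real. (\<lambda>x. c * f x) \<in> Dom \<and>
        (AE x in M. D (\<lambda>x. c * f x) x = c *\<^sub>R D f x)) \<and>
     \<comment> \<open>dense in L^2(mu)\<close>
     (\<forall>g. sq_int M g \<longrightarrow> (\<forall>\<epsilon>>0. \<exists>f\<in>Dom. L2dist2 M f g < \<epsilon>)) \<and>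
     \<comment> \<open>closed operator\<close>
     (\<forall>fs f G. (\<forall>n. fs n \<in> Dom) \<and> sq_int M f \<and> vsq_int M G \<and>
        (\<lambda>n. L2dist2 M (fs n) f) \<longlonglongrightarrow> 0 \<and> (\<lambda>n. L2Hdist2 M (D (fs n)) G) \<longlonglongrightarrow> 0
        \<longrightarrow> f \<in> Dom \<and> (AE x in M. D f x = G x)) \<and>
     \<comment> \<open>derivation property\<close>
     (\<forall>m fs F dF. (\<forall>j<m. fs j \<in> Dom) \<and> C1_bdd m F dF \<and> F (\<lambda>_. 0) = 0 \<longrightarrow>
        (\<lambda>x. F (vec_of m fs x)) \<in> Dom \<and>
        (AE x in M. D (\<lambda>x. F (vec_of m fs x)) x =
            (\<Sum>j<m. dF j (vec_of m fs x) *\<^sub>R D (fs j) x)))"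

definition E01 :: "'a measure \<Rightarrow> (('a \<Rightarrow> real) \<Rightarrow> ('a \<Rightarrow> 'h::{real_inner,banach,second_countable_topology})) \<Rightarrow> ('a \<Rightarrow> real) \<Rightarrow> real" where
  "E01 M D f = (1/2) * integral\<^sup>L M (\<lambda>x. (norm (D f x))\<^sup>2) + integral\<^sup>L M (\<lambda>x. (f x)\<^sup>2)"

definition Dom_on :: "'a measure \<Rightarrow> ('a \<Rightarrow> real) set \<Rightarrow> 'a set \<Rightarrow> ('a \<Rightarrow> real) set" where
  "Dom_on M Dom A = {f\<in>Dom. AE x in M. x \<notin> A \<longrightarrow> f x = 0}"

definition measurable_nest ::
  "'a measure \<Rightarrow> ('a \<Rightarrow> real) set \<Rightarrow> (('a \<Rightarrow> real) \<Rightarrow> ('a \<Rightarrow> 'h::{real_inner,banach,second_countable_topology})) \<Rightarrow> (nat \<Rightarrow> 'a set) \<Rightarrow> bool" where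
  "measurable_nest M Dom D Es \<longleftrightarrow>
     incseq Es \<and> (\<forall>k. Es k \<in> sets M) \<and>
     (\<forall>k. \<exists>h\<in>Dom. AE x in M. x \<in> Es k \<longrightarrow> 1 \<le> h x) \<and>
     (\<forall>f\<in>Dom. \<forall>\<epsilon>>0. \<exists>k. \<exists>g\<in>Dom_on M Dom (Es k). E01 M D (\<lambda>x. f x - g x) < \<epsilon>)"

end

theory Submission
  imports Defs
begin

lemma DERIV_glue:
  fixes f :: "real \<Rightarrow> real"
  assumes "(f has_real_derivative d) (at c within {..<c})"
    and "(f has_real_derivative d) (at c within {c<..})"
  shows "(f has_real_derivative d) (at c)"
  using assms unfolding has_field_derivative_iff
  by (simp add: filterlim_at_split)

definition qs :: "real \<Rightarrow> real" where
  "qs s = (if s \<le> 0 then 0 else if 1 \<le> s then 1 else 3 * s ^ 2 - 2 * s ^ 3)"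
definition dqs :: "real \<Rightarrow> real" where
  "dqs s = max 0 (6 * s - 6 * s ^ 2)"

lemma poly_deriv: "((\<lambda>s::real. 3 * s ^ 2 - 2 * s ^ 3) has_real_derivative (6 * s - 6 * s ^ 2)) (at s within S)"
  by (auto intro!: derivative_eq_intros simp: power2_eq_square)

lemma dqs_out: "s \<le> 0 \<or> 1 \<le> s \<Longrightarrow> dqs s = 0"
proof -
  assume a: "s \<le> 0 \<or> 1 \<le> s"
  have e: "6 * s - 6 * s ^ 2 = 6 * (s * (1 - s))" by (simp add: algebra_simps power2_eq_square)
  have "s * (1 - s) \<le> 0"
    using a by (auto intro: mult_nonpos_nonneg mult_nonneg_nonpos)
  then show ?thesis unfolding dqs_def e by simp
qed

lemma dqs_in: "0 < s \<Longrightarrow> s < 1 \<Longrightarrow> dqs s = 6 * s - 6 * s ^ 2"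
proof -
  assume "0 < s" "s < 1"
  then have "s * (1 - s) > 0" by (intro mult_pos_pos) auto
  moreover have e: "6 * s - 6 * s ^ 2 = 6 * (s * (1 - s))" by (simp add: algebra_simps power2_eq_square)
  ultimately show ?thesis unfolding dqs_def by simp
qed

lemma qs_deriv: "(qs has_real_derivative dqs s) (at s)"
proof -
  consider "s < 0" | "s = 0" | "0 < s \<and> s < 1" | "s = 1" | "1 < s" by linarith
  then show ?thesis
  proof cases
    case 1
    have "eventually (\<lambda>y. y < 0) (nhds s)" using 1 eventually_nhds_in_open[of "{..<0}" s] by simp
    then have ev: "eventually (\<lambda>y. qs y = 0) (nhds s)" by eventually_elim (auto simp: qs_def)
    have "((\<lambda>_. 0::real) has_real_derivative 0) (at s)" by simp
    then show ?thesis using 1 dqs_out[of s]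
      by (subst DERIV_cong_ev[OF refl ev]) auto
  next
    case 5
    have "eventually (\<lambda>y. y > 1) (nhds s)" using 5 eventually_nhds_in_open[of "{1<..}" s] by simp
    then have ev: "eventually (\<lambda>y. qs y = 1) (nhds s)" by eventually_elim (auto simp: qs_def)
    have "((\<lambda>_. 1::real) has_real_derivative 0) (at s)" by simp
    then show ?thesis using 5 dqs_out[of s]
      by (subst DERIV_cong_ev[OF refl ev]) auto
  next
    case 3
    have "eventually (\<lambda>y. 0 < y \<and> y < 1) (nhds s)" using 3 eventually_nhds_in_open[of "{0<..<1}" s] by simp
    then have ev: "eventually (\<lambda>y. qs y = 3 * y ^ 2 - 2 * y ^ 3) (nhds s)" by eventually_elim (auto simp: qs_def)
    show ?thesis using 3 dqs_in[of s]
      by (subst DERIV_cong_ev[OF refl ev refl]) (auto intro: poly_deriv)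
  next
    case 2
    show ?thesis unfolding 2
    proof (rule DERIV_glue)
      have "eventually (\<lambda>y. qs y = 0) (at 0 within {..<0::real})"
        by (auto simp: eventually_at_filter qs_def)
      then show "(qs has_real_derivative dqs 0) (at 0 within {..<0})"
        by (subst has_field_derivative_cong_eventually[where g="\<lambda>_. 0"]) (auto simp: qs_def dqs_def)
      have "eventually (\<lambda>y. y < 1) (nhds (0::real))"
        using eventually_nhds_in_open[of "{..<1::real}" "0::real"] by simp
      then have "eventually (\<lambda>y. qs y = 3 * y ^ 2 - 2 * y ^ 3) (at 0 within {(0::real)<..})"
        unfolding eventually_at_filter by eventually_elim (auto simp: qs_def)
      then show "(qs has_real_derivative dqs 0) (at 0 within {0<..})"
        by (subst has_field_derivative_cong_eventually[where g="\<lambda>y. 3 * y ^ 2 - 2 * y ^ 3"])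
           (auto simp: qs_def dqs_def intro: poly_deriv[THEN DERIV_cong])
    qed
  next
    case 4
    show ?thesis unfolding 4
    proof (rule DERIV_glue)
      have "eventually (\<lambda>y. y > 0) (nhds (1::real))"
        using eventually_nhds_in_open[of "{(0::real)<..}" "1::real"] by simp
      then have "eventually (\<lambda>y. qs y = 3 * y ^ 2 - 2 * y ^ 3) (at 1 within {..<1::real})"
        unfolding eventually_at_filter by eventually_elim (auto simp: qs_def)
      then show "(qs has_real_derivative dqs 1) (at 1 within {..<1})"
        by (subst has_field_derivative_cong_eventually[where g="\<lambda>y. 3 * y ^ 2 - 2 * y ^ 3"])
           (auto simp: qs_def dqs_def intro: poly_deriv[THEN DERIV_cong])
      have "eventually (\<lambda>y. qs y = 1) (at 1 within {(1::real)<..})"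
        by (auto simp: eventually_at_filter qs_def)
      then show "(qs has_real_derivative dqs 1) (at 1 within {1<..})"
        by (subst has_field_derivative_cong_eventually[where g="\<lambda>_. 1"]) (auto simp: qs_def dqs_def)
    qed
  qed
qed

lemma qs_bounds: "0 \<le> qs s" "qs s \<le> 1"
proof -
  have "0 \<le> 3 * s ^ 2 - 2 * s ^ 3 \<and> 3 * s ^ 2 - 2 * s ^ 3 \<le> 1" if "0 < s" "s < 1"
  proof -
    have a: "3 * s ^ 2 - 2 * s ^ 3 = s ^ 2 * (3 - 2 * s)" by (simp add: algebra_simps power2_eq_square power3_eq_cube)
    have b: "1 - (3 * s ^ 2 - 2 * s ^ 3) = (1 - s) ^ 2 * (1 + 2 * s)" by (simp add: algebra_simps power2_eq_square power3_eq_cube)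
    have "0 \<le> s ^ 2 * (3 - 2 * s)" using that by (intro mult_nonneg_nonneg) auto
    moreover have "0 \<le> (1 - s) ^ 2 * (1 + 2 * s)" using that by (intro mult_nonneg_nonneg) auto
    ultimately show ?thesis using a b by linarith
  qed
  then show "0 \<le> qs s" "qs s \<le> 1" by (auto simp: qs_def)
qed

lemma dqs_bound: "\<bar>dqs s\<bar> \<le> 2"
proof -
  have e: "6 * s - 6 * s ^ 2 = 3/2 - 6 * (s - 1/2) ^ 2" by (simp add: algebra_simps power2_eq_square)
  have "0 \<le> (s - 1/2) ^ 2" by simp
  then have "6 * s - 6 * s ^ 2 \<le> 2" unfolding e by linarith
  then show ?thesis unfolding dqs_def by auto
qed

lemma dqs_cont: "continuous_on UNIV dqs"
  unfolding dqs_def by (intro continuous_intros)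

lemma qs_ge1: "1 \<le> s \<Longrightarrow> qs s = 1" by (simp add: qs_def)
lemma qs_le0: "s \<le> 0 \<Longrightarrow> qs s = 0" by (simp add: qs_def)
lemma qs_pos: "qs s > 0 \<Longrightarrow> s > 0" by (auto simp: qs_def split: if_splits)


lemma sq_tri: "(a + b)\<^sup>2 \<le> 2 * a\<^sup>2 + 2 * (b::real)\<^sup>2"
proof -
  have "0 \<le> (a - b)\<^sup>2" by simp
  then show ?thesis by (simp add: power2_eq_square algebra_simps)
qed

lemma norm_sq_tri: "(norm (a + b))\<^sup>2 \<le> 2 * (norm a)\<^sup>2 + 2 * (norm (b::'b::real_normed_vector))\<^sup>2"
proof -
  have "(norm (a + b))\<^sup>2 \<le> (norm a + norm b)\<^sup>2"
    by (intro power_mono norm_triangle_ineq) simp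
  also have "\<dots> \<le> 2 * (norm a)\<^sup>2 + 2 * (norm b)\<^sup>2" by (rule sq_tri)
  finally show ?thesis .
qed

locale stdg =
  fixes M :: "'a measure" and Dom :: "('a \<Rightarrow> real) set"
    and D :: "('a \<Rightarrow> real) \<Rightarrow> ('a \<Rightarrow> 'h::{real_inner,banach,second_countable_topology})"
  assumes st: "standing M Dom D"
begin

lemma dom_sq: "f \<in> Dom \<Longrightarrow> sq_int M f \<and> vsq_int M (D f)"
  using st unfolding standing_def by blast

lemma dom_meas[measurable_dest]:
  "f \<in> Dom \<Longrightarrow> f \<in> borel_measurable M"
  using dom_sq unfolding sq_int_def by blast

lemma dom_Dmeas:
  "f \<in> Dom \<Longrightarrow> D f \<in> borel_measurable M"
  using dom_sq unfolding vsq_int_def by blast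

lemma dom_int: "f \<in> Dom \<Longrightarrow> integrable M (\<lambda>x. (f x)\<^sup>2)"
  using dom_sq unfolding sq_int_def by blast

lemma dom_Dint: "f \<in> Dom \<Longrightarrow> integrable M (\<lambda>x. (norm (D f x))\<^sup>2)"
  using dom_sq unfolding vsq_int_def by blast

lemma dom_ae: "f \<in> Dom \<Longrightarrow> g \<in> borel_measurable M \<Longrightarrow> (AE x in M. f x = g x) \<Longrightarrow>
    g \<in> Dom \<and> (AE x in M. D g x = D f x)"
  using st unfolding standing_def by blast

lemma dom_zero: "(\<lambda>x. 0) \<in> Dom"
  using st unfolding standing_def by blast

lemma dom_add: "f \<in> Dom \<Longrightarrow> g \<in> Dom \<Longrightarrow> (\<lambda>x. f x + g x) \<in> Dom \<and>
        (AE x in M. D (\<lambda>x. f x + g x) x = D f x + D g x)"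
  using st unfolding standing_def by blast

lemma dom_smult: "f \<in> Dom \<Longrightarrow> (\<lambda>x. c * f x) \<in> Dom \<and>
        (AE x in M. D (\<lambda>x. c * f x) x = c *\<^sub>R D f x)"
  using st unfolding standing_def by blast

lemma dom_diff: assumes f: "f \<in> Dom" and g: "g \<in> Dom"
  shows "(\<lambda>x. f x - g x) \<in> Dom \<and> (AE x in M. D (\<lambda>x. f x - g x) x = D f x - D g x)"
proof -
  have m: "(\<lambda>x. -1 * g x) \<in> Dom" "AE x in M. D (\<lambda>x. -1 * g x) x = (-1) *\<^sub>R D g x"
    using dom_smult[OF g, of "-1"] by auto
  have a: "(\<lambda>x. f x + (\<lambda>x. -1 * g x) x) \<in> Dom"
    "AE x in M. D (\<lambda>x. f x + (\<lambda>x. -1 * g x) x) x = D f x + D (\<lambda>x. -1 * g x) x"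
    using dom_add[OF f m(1)] by auto
  have e: "(\<lambda>x. f x + (\<lambda>x. -1 * g x) x) = (\<lambda>x. f x - g x)" by auto
  have "AE x in M. D (\<lambda>x. f x - g x) x = D f x - D g x"
    using a(2) m(2) unfolding e by eventually_elim simp
  then show ?thesis using a(1) unfolding e by simp
qed

lemma dom_sum: "finite I \<Longrightarrow> (\<And>i. i \<in> I \<Longrightarrow> fs i \<in> Dom) \<Longrightarrow> (\<lambda>x. \<Sum>i\<in>I. fs i x) \<in> Dom"
proof (induction I rule: finite_induct)
  case empty
  then show ?case using dom_zero by simp
next
  case (insert i I)
  have "(\<lambda>x. fs i x + (\<lambda>x. \<Sum>i\<in>I. fs i x) x) \<in> Dom"
    using dom_add[of "fs i" "\<lambda>x. \<Sum>i\<in>I. fs i x"] insert by auto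
  then show ?case using insert by simp
qed


lemma deriv_prop_all: "\<forall>m fs F dF. (\<forall>j<m. fs j \<in> Dom) \<and> C1_bdd m F dF \<and> F (\<lambda>_. 0) = 0 \<longrightarrow>
        (\<lambda>x. F (vec_of m fs x)) \<in> Dom \<and>
        (AE x in M. D (\<lambda>x. F (vec_of m fs x)) x =
            (\<Sum>j<m. dF j (vec_of m fs x) *\<^sub>R D (fs j) x))"
  using st unfolding standing_def by (elim conjE) assumption

lemma deriv_prop: "(\<forall>j<m. fs j \<in> Dom) \<Longrightarrow> C1_bdd m F dF \<Longrightarrow> F (\<lambda>_. 0) = 0 \<Longrightarrow>
        (\<lambda>x. F (vec_of m fs x)) \<in> Dom \<and>
        (AE x in M. D (\<lambda>x. F (vec_of m fs x)) x =
            (\<Sum>j<m. dF j (vec_of m fs x) *\<^sub>R D (fs j) x))"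
  using deriv_prop_all by blast

lemma closed_prop_all: "\<forall>fs f G. (\<forall>n. fs n \<in> Dom) \<and> sq_int M f \<and> vsq_int M G \<and>
        (\<lambda>n. L2dist2 M (fs n) f) \<longlonglongrightarrow> 0 \<and> (\<lambda>n. L2Hdist2 M (D (fs n)) G) \<longlonglongrightarrow> 0
        \<longrightarrow> f \<in> Dom \<and> (AE x in M. D f x = G x)"
  using st unfolding standing_def by (elim conjE) assumption

lemma closed_prop: "(\<And>n. fs n \<in> Dom) \<Longrightarrow> sq_int M f \<Longrightarrow> vsq_int M G \<Longrightarrow>
        (\<lambda>n. L2dist2 M (fs n) f) \<longlonglongrightarrow> 0 \<Longrightarrow> (\<lambda>n. L2Hdist2 M (D (fs n)) G) \<longlonglongrightarrow> 0
        \<Longrightarrow> f \<in> Dom \<and> (AE x in M. D f x = G x)"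
  using closed_prop_all by blast

end

context stdg begin

lemma chain1:
  assumes f: "f \<in> Dom"
    and d: "\<And>t. (\<phi> has_real_derivative \<phi>' t) (at t)"
    and c: "continuous_on UNIV \<phi>'"
    and b: "\<And>t. \<bar>\<phi>' t\<bar> \<le> B"
    and z: "\<phi> 0 = 0"
  shows "(\<lambda>x. \<phi> (f x)) \<in> Dom \<and> (AE x in M. D (\<lambda>x. \<phi> (f x)) x = \<phi>' (f x) *\<^sub>R D f x)"
proof -
  define F where "F = (\<lambda>v::nat\<Rightarrow>real. \<phi> (v 0))"
  define dF where "dF = (\<lambda>(j::nat) (v::nat\<Rightarrow>real). \<phi>' (v 0))"
  have C1: "C1_bdd 1 F dF"
    unfolding C1_bdd_def
  proof (intro conjI ballI allI impI)
    fix x :: "nat \<Rightarrow> real" and j :: nat assume "j < 1"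
    then have j: "j = 0" by simp
    show "((\<lambda>t. F (x(j := t))) has_real_derivative dF j x) (at (x j))"
      unfolding j F_def dF_def using d by simp
  next
    fix j :: nat assume "j < 1"
    have "continuous_on UNIV (\<lambda>v::nat\<Rightarrow>real. \<phi>' (v 0))"
      by (rule continuous_on_compose2[OF c continuous_on_product_coordinates]) auto
    then show "continuous_on (Rm 1) (dF j)"
      unfolding dF_def by (rule continuous_on_subset) auto
  next
    fix j :: nat assume "j < 1"
    show "\<exists>B. \<forall>x\<in>Rm 1. \<bar>dF j x\<bar> \<le> B" unfolding dF_def using b by blast
  qed
  have z1: "F (\<lambda>_. 0) = 0" using z by (simp add: F_def)
  have fsD: "\<forall>j<1. (\<lambda>_. f) j \<in> Dom" using f by simp
  have "(\<lambda>x. F (vec_of 1 (\<lambda>_. f) x)) \<in> Dom \<and>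
        (AE x in M. D (\<lambda>x. F (vec_of 1 (\<lambda>_. f) x)) x =
            (\<Sum>j<1. dF j (vec_of 1 (\<lambda>_. f) x) *\<^sub>R D ((\<lambda>_. f) j) x))"
    using deriv_prop[OF fsD C1 z1] .
  moreover have "(\<lambda>x. F (vec_of 1 (\<lambda>_. f) x)) = (\<lambda>x. \<phi> (f x))"
    by (simp add: F_def vec_of_def)
  ultimately show ?thesis by (simp add: dF_def vec_of_def)
qed

end

context stdg begin

lemma chain2:
  assumes f: "f \<in> Dom" and g: "g \<in> Dom"
    and d1: "\<And>t. (\<phi> has_real_derivative \<phi>' t) (at t)"
    and c1: "continuous_on UNIV \<phi>'"
    and d2: "\<And>t. (\<psi> has_real_derivative \<psi>' t) (at t)"
    and c2: "continuous_on UNIV \<psi>'"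
    and b: "\<And>t. \<bar>\<phi> t\<bar> \<le> B" "\<And>t. \<bar>\<phi>' t\<bar> \<le> B" "\<And>t. \<bar>\<psi> t\<bar> \<le> B" "\<And>t. \<bar>\<psi>' t\<bar> \<le> B"
    and z: "\<phi> 0 = 0"
  shows "(\<lambda>x. \<phi> (f x) * \<psi> (g x)) \<in> Dom \<and>
     (AE x in M. D (\<lambda>x. \<phi> (f x) * \<psi> (g x)) x =
        (\<phi>' (f x) * \<psi> (g x)) *\<^sub>R D f x + (\<phi> (f x) * \<psi>' (g x)) *\<^sub>R D g x)"
proof -
  define fs where "fs = (\<lambda>j::nat. if j = 0 then f else g)"
  define F where "F = (\<lambda>v::nat\<Rightarrow>real. \<phi> (v 0) * \<psi> (v 1))"
  define dF where "dF = (\<lambda>(j::nat) (v::nat\<Rightarrow>real).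
      if j = 0 then \<phi>' (v 0) * \<psi> (v 1) else \<phi> (v 0) * \<psi>' (v 1))"
  have cphi: "continuous_on UNIV \<phi>"
    using d1 by (intro continuous_at_imp_continuous_on) (auto intro: DERIV_isCont)
  have cpsi: "continuous_on UNIV \<psi>"
    using d2 by (intro continuous_at_imp_continuous_on) (auto intro: DERIV_isCont)
  have cc: "continuous_on UNIV (\<lambda>v::nat\<Rightarrow>real. h (v i))" if "continuous_on UNIV h" for h :: "real \<Rightarrow> real" and i
    by (rule continuous_on_compose2[OF that continuous_on_product_coordinates]) auto
  have C1: "C1_bdd 2 F dF"
    unfolding C1_bdd_def
  proof (intro conjI ballI allI impI)
    fix x :: "nat \<Rightarrow> real" and j :: nat assume "j < 2"
    then consider "j = 0" | "j = 1" by linarith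
    then show "((\<lambda>t. F (x(j := t))) has_real_derivative dF j x) (at (x j))"
    proof cases
      case 1
      have "((\<lambda>t. \<phi> t * \<psi> (x 1)) has_real_derivative \<phi>' (x 0) * \<psi> (x 1)) (at (x 0))"
        by (rule DERIV_cmult_right[OF d1])
      then show ?thesis unfolding 1 F_def dF_def by simp
    next
      case 2
      have "((\<lambda>t. \<phi> (x 0) * \<psi> t) has_real_derivative \<phi> (x 0) * \<psi>' (x 1)) (at (x 1))"
        by (rule DERIV_cmult[OF d2])
      then show ?thesis unfolding 2 F_def dF_def by simp
    qed
  next
    fix j :: nat assume "j < 2"
    have A: "continuous_on UNIV (\<lambda>v::nat\<Rightarrow>real. \<phi>' (v 0) * \<psi> (v 1))"
      using cc[OF c1] cc[OF cpsi] by (rule continuous_on_mult)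
    have B: "continuous_on UNIV (\<lambda>v::nat\<Rightarrow>real. \<phi> (v 0) * \<psi>' (v 1))"
      using cc[OF cphi] cc[OF c2] by (rule continuous_on_mult)
    have "continuous_on UNIV (dF j)"
      unfolding dF_def using A B by (cases "j = 0") auto
    then show "continuous_on (Rm 2) (dF j)"
      by (rule continuous_on_subset) auto
  next
    fix j :: nat assume "j < 2"
    have B0: "0 \<le> B" using b(1)[of 0] by linarith
    have "\<bar>dF j x\<bar> \<le> B * B" for x
      unfolding dF_def using b B0
      by (auto simp: abs_mult intro!: mult_mono)
    then show "\<exists>B. \<forall>x\<in>Rm 2. \<bar>dF j x\<bar> \<le> B" by blast
  qed
  have z2: "F (\<lambda>_. 0) = 0" using z by (simp add: F_def)
  have fsD: "\<forall>j<2. fs j \<in> Dom" using f g by (simp add: fs_def)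
  have "(\<lambda>x. F (vec_of 2 fs x)) \<in> Dom \<and>
        (AE x in M. D (\<lambda>x. F (vec_of 2 fs x)) x =
            (\<Sum>j<2. dF j (vec_of 2 fs x) *\<^sub>R D (fs j) x))"
    using deriv_prop[OF fsD C1 z2] .
  moreover have "(\<lambda>x. F (vec_of 2 fs x)) = (\<lambda>x. \<phi> (f x) * \<psi> (g x))"
    by (simp add: F_def vec_of_def fs_def)
  moreover have "(\<Sum>j<2. dF j (vec_of 2 fs x) *\<^sub>R D (fs j) x) =
      (\<phi>' (f x) * \<psi> (g x)) *\<^sub>R D f x + (\<phi> (f x) * \<psi>' (g x)) *\<^sub>R D g x" for x
    by (simp add: dF_def vec_of_def fs_def eval_nat_numeral)
  ultimately show ?thesis by simp
qed

end

context stdg begin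

lemma E01_nonneg: "0 \<le> E01 M D f"
  unfolding E01_def by (intro add_nonneg_nonneg mult_nonneg_nonneg integral_nonneg_AE) auto

lemma E01_add: assumes f: "f \<in> Dom" and g: "g \<in> Dom"
  shows "E01 M D (\<lambda>x. f x + g x) \<le> 2 * E01 M D f + 2 * E01 M D g"
proof -
  have s: "(\<lambda>x. f x + g x) \<in> Dom" and ae: "AE x in M. D (\<lambda>x. f x + g x) x = D f x + D g x"
    using dom_add[OF f g] by auto
  have ae2: "AE x in M. (norm (D (\<lambda>x. f x + g x) x))\<^sup>2 \<le> 2 * (norm (D f x))\<^sup>2 + 2 * (norm (D g x))\<^sup>2"
    using ae by eventually_elim (simp add: norm_sq_tri)
  have i1: "integral\<^sup>L M (\<lambda>x. (norm (D (\<lambda>x. f x + g x) x))\<^sup>2) \<le>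
      integral\<^sup>L M (\<lambda>x. 2 * (norm (D f x))\<^sup>2 + 2 * (norm (D g x))\<^sup>2)"
    using ae2 dom_Dint[OF s] dom_Dint[OF f] dom_Dint[OF g]
    by (intro integral_mono_AE) auto
  have i2: "integral\<^sup>L M (\<lambda>x. (f x + g x)\<^sup>2) \<le>
      integral\<^sup>L M (\<lambda>x. 2 * (f x)\<^sup>2 + 2 * (g x)\<^sup>2)"
    using dom_int[OF s] dom_int[OF f] dom_int[OF g]
    by (intro integral_mono) (auto intro!: sq_tri)
  have e1: "integral\<^sup>L M (\<lambda>x. 2 * (norm (D f x))\<^sup>2 + 2 * (norm (D g x))\<^sup>2) =
     2 * integral\<^sup>L M (\<lambda>x. (norm (D f x))\<^sup>2) + 2 * integral\<^sup>L M (\<lambda>x. (norm (D g x))\<^sup>2)"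
    using dom_Dint[OF f] dom_Dint[OF g] by simp
  have e2: "integral\<^sup>L M (\<lambda>x. 2 * (f x)\<^sup>2 + 2 * (g x)\<^sup>2) =
     2 * integral\<^sup>L M (\<lambda>x. (f x)\<^sup>2) + 2 * integral\<^sup>L M (\<lambda>x. (g x)\<^sup>2)"
    using dom_int[OF f] dom_int[OF g] by simp
  have ar: "a \<le> 2*c + 2*d \<Longrightarrow> b \<le> 2*e + 2*f' \<Longrightarrow> 1/2*a + b \<le> 2*(1/2*c+e) + 2*(1/2*d+f')"
    for a b c d e f' :: real by (simp add: field_simps)
  show ?thesis unfolding E01_def by (rule ar) (use i1 i2 e1 e2 in auto)
qed

lemma E01_tri: assumes f: "f \<in> Dom" and g: "g \<in> Dom" and h: "h \<in> Dom"
  shows "E01 M D (\<lambda>x. f x - h x) \<le> 2 * E01 M D (\<lambda>x. f x - g x) + 2 * E01 M D (\<lambda>x. g x - h x)"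
proof -
  have e: "(\<lambda>x. f x - h x) = (\<lambda>x. (\<lambda>x. f x - g x) x + (\<lambda>x. g x - h x) x)" by auto
  have "(\<lambda>x. f x - g x) \<in> Dom" "(\<lambda>x. g x - h x) \<in> Dom" using dom_diff f g h by auto
  from E01_add[OF this] show ?thesis unfolding e by simp
qed

end

definition phe :: "real \<Rightarrow> real \<Rightarrow> real" where
  "phe e t = t * t * t / (t * t + e)"
definition dphe :: "real \<Rightarrow> real \<Rightarrow> real" where
  "dphe e t = (t * t * t * t + 3 * e * t * t) / ((t * t + e) * (t * t + e))"

lemma den_pos: "0 < e \<Longrightarrow> 0 < t * t + (e::real)"
  by (intro add_nonneg_pos) auto

lemma phe_deriv: assumes e: "0 < e" shows "(phe e has_real_derivative dphe e t) (at t)"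
proof -
  have nz: "t * t + e \<noteq> 0" using den_pos[OF e, of t] by linarith
  have nz2: "e + t * t \<noteq> 0" using den_pos[OF e, of t] by linarith
  show ?thesis unfolding phe_def dphe_def
    by (auto intro!: derivative_eq_intros simp: nz nz2 field_simps)
qed

lemma dphe_bounds: assumes e: "0 < e" shows "0 \<le> dphe e t" "dphe e t \<le> 3"
proof -
  have p: "0 < (t * t + e) * (t * t + e)" using den_pos[OF e, of t] by simp
  have a0: "0 \<le> (t*t)*(t*t)" by simp
  have b0: "0 \<le> e*(t*t)" using e by simp
  have eq0: "t * t * t * t + 3 * e * t * t = (t*t)*(t*t) + 3*(e*(t*t))" by (simp add: algebra_simps)
  have n0: "0 \<le> t * t * t * t + 3 * e * t * t" using a0 b0 unfolding eq0 by linarith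
  have "t * t * t * t + 3 * e * t * t \<le> 3 * ((t * t + e) * (t * t + e))"
  proof -
    have "3 * ((t * t + e) * (t * t + e)) - (t * t * t * t + 3 * e * t * t) = 2 * ((t*t)*(t*t)) + 3 * (e * (t * t)) + 3 * (e * e)"
      by (simp add: algebra_simps)
    moreover have "0 \<le> 2 * ((t*t)*(t*t)) + 3 * (e * (t * t)) + 3 * (e * e)" using a0 b0 e by simp
    ultimately show ?thesis by linarith
  qed
  then show "0 \<le> dphe e t" "dphe e t \<le> 3" unfolding dphe_def using p n0
    by (auto simp: divide_le_eq)
qed

lemma dphe_cont: assumes e: "0 < e" shows "continuous_on UNIV (dphe e)"
proof -
  have nz1: "t * t + e \<noteq> 0" for t using den_pos[OF e, of t] by linarith
  show ?thesis unfolding dphe_def by (intro continuous_intros) (auto simp: nz1)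
qed

lemma phe_0: "phe e 0 = 0" by (simp add: phe_def)
lemma dphe_0: "dphe e 0 = 0" by (simp add: dphe_def)

lemma phe_diff: assumes e: "0 < e" shows "\<bar>phe e t - t\<bar> \<le> \<bar>t\<bar>"
proof -
  have p: "0 < t * t + e" using den_pos[OF e] by simp
  have "phe e t - t = - (e * t) / (t * t + e)" unfolding phe_def using p by (simp add: field_simps)
  then have "\<bar>phe e t - t\<bar> = e * \<bar>t\<bar> / (t * t + e)" using p e by (simp add: abs_mult)
  also have "\<dots> \<le> \<bar>t\<bar>"
  proof -
    have "0 \<le> \<bar>t\<bar> * (t * t)" by simp
    then have "e * \<bar>t\<bar> \<le> \<bar>t\<bar> * (t * t + e)" by (simp add: algebra_simps)
    then show ?thesis using p by (simp add: divide_le_eq)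
  qed
  finally show ?thesis .
qed

definition epsn :: "nat \<Rightarrow> real" where "epsn n = inverse (real (Suc n))"

lemma epsn_pos: "0 < epsn n" by (simp add: epsn_def)
lemma epsn_lim: "epsn \<longlonglongrightarrow> 0" unfolding epsn_def by (rule LIMSEQ_inverse_real_of_nat)

lemma phe_lim: "(\<lambda>n. phe (epsn n) t) \<longlonglongrightarrow> t"
proof (cases "t = 0")
  case True then show ?thesis by (simp add: phe_def)
next
  case False
  have "(\<lambda>n. t * t * t / (t * t + epsn n)) \<longlonglongrightarrow> t * t * t / (t * t + 0)"
    using False by (intro tendsto_intros epsn_lim) auto
  then show ?thesis using False by (simp add: phe_def)
qed

lemma dphe_lim: "(\<lambda>n. dphe (epsn n) t) \<longlonglongrightarrow> (if t = 0 then 0 else 1)"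
proof (cases "t = 0")
  case True then show ?thesis by (simp add: dphe_def)
next
  case False
  have "(\<lambda>n. (t * t * t * t + 3 * epsn n * t * t) / ((t * t + epsn n) * (t * t + epsn n)))
      \<longlonglongrightarrow> (t * t * t * t + 3 * 0 * t * t) / ((t * t + 0) * (t * t + 0))"
    using False by (intro tendsto_intros epsn_lim) auto
  then show ?thesis using False by (simp add: dphe_def)
qed

context stdg begin

lemma locality: assumes f: "f \<in> Dom" shows "AE x in M. f x = 0 \<longrightarrow> D f x = 0"
proof -
  have fm[measurable]: "f \<in> borel_measurable M" using dom_meas[OF f] .
  have Dfm[measurable]: "D f \<in> borel_measurable M" using dom_Dmeas[OF f] .
  define fs where "fs = (\<lambda>n x. phe (epsn n) (f x))"
  define G where "G = (\<lambda>x. if f x = 0 then 0 else D f x)"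
  have ch: "fs n \<in> Dom \<and> (AE x in M. D (fs n) x = dphe (epsn n) (f x) *\<^sub>R D f x)" for n
    unfolding fs_def
    using chain1[OF f phe_deriv[OF epsn_pos[of n]] dphe_cont[OF epsn_pos[of n]], where B=3] dphe_bounds[OF epsn_pos[of n]]
    by (simp add: phe_0)
  have Gm[measurable]: "G \<in> borel_measurable M" unfolding G_def by measurable
  have sqf: "sq_int M f" using dom_sq[OF f] by blast
  have vG: "vsq_int M G" unfolding vsq_int_def
  proof
    show "G \<in> borel_measurable M" by measurable
    show "integrable M (\<lambda>x. (norm (G x))\<^sup>2)"
      by (rule Bochner_Integration.integrable_bound[OF dom_Dint[OF f]]) (auto simp: G_def)
  qed
  have L1: "(\<lambda>n. L2dist2 M (fs n) f) \<longlonglongrightarrow> 0"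
  proof -
    have "(\<lambda>n. integral\<^sup>L M (\<lambda>x. (fs n x - f x)\<^sup>2)) \<longlonglongrightarrow> integral\<^sup>L M (\<lambda>x. 0)"
    proof (rule integral_dominated_convergence[where w="\<lambda>x. (f x)\<^sup>2"])
      show "(\<lambda>x. 0::real) \<in> borel_measurable M" by simp
      show "(\<lambda>x. (fs n x - f x)\<^sup>2) \<in> borel_measurable M" for n
        using dom_meas[OF ch[THEN conjunct1]] by measurable
      show "integrable M (\<lambda>x. (f x)\<^sup>2)" using dom_int[OF f] .
      show "AE x in M. (\<lambda>n. (fs n x - f x)\<^sup>2) \<longlonglongrightarrow> 0"
      proof (rule AE_I2)
        fix x
        have "(\<lambda>n. (fs n x - f x)\<^sup>2) \<longlonglongrightarrow> (f x - f x)\<^sup>2"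
          unfolding fs_def by (intro tendsto_intros phe_lim)
        then show "(\<lambda>n. (fs n x - f x)\<^sup>2) \<longlonglongrightarrow> 0" by simp
      qed
      show "AE x in M. norm ((fs n x - f x)\<^sup>2) \<le> (f x)\<^sup>2" for n
      proof (rule AE_I2)
        fix x
        have "\<bar>fs n x - f x\<bar> \<le> \<bar>f x\<bar>" unfolding fs_def by (rule phe_diff[OF epsn_pos])
        then show "norm ((fs n x - f x)\<^sup>2) \<le> (f x)\<^sup>2" by (simp add: abs_le_square_iff)
      qed
    qed
    then show ?thesis unfolding L2dist2_def by simp
  qed
  have L2: "(\<lambda>n. L2Hdist2 M (D (fs n)) G) \<longlonglongrightarrow> 0"
  proof -
    have eq: "L2Hdist2 M (D (fs n)) G = integral\<^sup>L M (\<lambda>x. (norm (dphe (epsn n) (f x) *\<^sub>R D f x - G x))\<^sup>2)" for n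
      unfolding L2Hdist2_def
    proof (rule integral_cong_AE)
      show "(\<lambda>x. (norm (D (fs n) x - G x))\<^sup>2) \<in> borel_measurable M"
        using dom_Dmeas[OF ch[THEN conjunct1]] by measurable
      show "(\<lambda>x. (norm (dphe (epsn n) (f x) *\<^sub>R D f x - G x))\<^sup>2) \<in> borel_measurable M"
        using borel_measurable_continuous_onI[OF dphe_cont[OF epsn_pos]] by measurable
      show "AE x in M. (norm (D (fs n) x - G x))\<^sup>2 = (norm (dphe (epsn n) (f x) *\<^sub>R D f x - G x))\<^sup>2"
        using ch[of n, THEN conjunct2] by eventually_elim simp
    qed
    have "(\<lambda>n. integral\<^sup>L M (\<lambda>x. (norm (dphe (epsn n) (f x) *\<^sub>R D f x - G x))\<^sup>2)) \<longlonglongrightarrow> integral\<^sup>L M (\<lambda>x. 0)"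
    proof (rule integral_dominated_convergence[where w="\<lambda>x. 16 * (norm (D f x))\<^sup>2"])
      show "(\<lambda>x. 0::real) \<in> borel_measurable M" by simp
      show "(\<lambda>x. (norm (dphe (epsn n) (f x) *\<^sub>R D f x - G x))\<^sup>2) \<in> borel_measurable M" for n
        using borel_measurable_continuous_onI[OF dphe_cont[OF epsn_pos]] by measurable
      show "integrable M (\<lambda>x. 16 * (norm (D f x))\<^sup>2)" using dom_Dint[OF f] by simp
      show "AE x in M. (\<lambda>n. (norm (dphe (epsn n) (f x) *\<^sub>R D f x - G x))\<^sup>2) \<longlonglongrightarrow> 0"
      proof (rule AE_I2)
        fix x
        have "(\<lambda>n. (norm (dphe (epsn n) (f x) *\<^sub>R D f x - G x))\<^sup>2) \<longlonglongrightarrow>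
              (norm ((if f x = 0 then 0 else 1) *\<^sub>R D f x - G x))\<^sup>2"
          by (intro tendsto_intros dphe_lim)
        moreover have z: "(norm ((if f x = 0 then 0 else 1) *\<^sub>R D f x - G x))\<^sup>2 = 0"
          by (simp add: G_def)
        ultimately show "(\<lambda>n. (norm (dphe (epsn n) (f x) *\<^sub>R D f x - G x))\<^sup>2) \<longlonglongrightarrow> 0"
          by (simp only: z)
      qed
      show "AE x in M. norm ((norm (dphe (epsn n) (f x) *\<^sub>R D f x - G x))\<^sup>2) \<le> 16 * (norm (D f x))\<^sup>2" for n
      proof (rule AE_I2)
        fix x
        have b: "0 \<le> dphe (epsn n) (f x)" "dphe (epsn n) (f x) \<le> 3" using dphe_bounds[OF epsn_pos] by auto
        have nG: "norm (G x) \<le> norm (D f x)" by (simp add: G_def)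
        have "norm (dphe (epsn n) (f x) *\<^sub>R D f x - G x) \<le> norm (dphe (epsn n) (f x) *\<^sub>R D f x) + norm (G x)"
          by (rule norm_triangle_ineq4)
        also have "\<dots> \<le> 3 * norm (D f x) + norm (D f x)"
          using b nG by (intro add_mono) (auto intro: mult_right_mono)
        finally have "norm (dphe (epsn n) (f x) *\<^sub>R D f x - G x) \<le> 4 * norm (D f x)" by simp
        then have "(norm (dphe (epsn n) (f x) *\<^sub>R D f x - G x))\<^sup>2 \<le> (4 * norm (D f x))\<^sup>2"
          by (intro power_mono) auto
        then show "norm ((norm (dphe (epsn n) (f x) *\<^sub>R D f x - G x))\<^sup>2) \<le> 16 * (norm (D f x))\<^sup>2"
          by (simp add: power_mult_distrib)
      qed
    qed
    then show ?thesis unfolding eq by simp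
  qed
  have "f \<in> Dom \<and> (AE x in M. D f x = G x)"
    by (rule closed_prop[OF _ sqf vG L1 L2]) (use ch in blast)
  then have "AE x in M. D f x = G x" by blast
  then show ?thesis by eventually_elim (simp add: G_def split: if_split_asm)
qed

end

definition tr :: "real \<Rightarrow> real \<Rightarrow> real" where
  "tr c t = t / (1 + c * c * (t * t))"
definition dtr :: "real \<Rightarrow> real \<Rightarrow> real" where
  "dtr c t = (1 - c * c * (t * t)) / ((1 + c * c * (t * t)) * (1 + c * c * (t * t)))"

lemma tr_den: "1 \<le> 1 + c * c * (t * (t::real))"
  by simp

lemma tr_deriv: "(tr c has_real_derivative dtr c t) (at t)"
proof -
  have nz: "1 + c * c * (t * t) \<noteq> 0" using tr_den[of c t] by linarith
  have nz2: "1 + c * (c * (t * t)) \<noteq> 0" using nz by (simp add: mult.assoc)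
  show ?thesis unfolding tr_def dtr_def
    by (auto intro!: derivative_eq_intros simp: nz nz2 field_simps)
qed

lemma dtr_bound: "\<bar>dtr c t\<bar> \<le> 1"
proof -
  define s where "s = c * c * (t * t)"
  have s0: "0 \<le> s" unfolding s_def by simp
  have "\<bar>1 - s\<bar> \<le> (1 + s) * (1 + s)"
  proof -
    have "\<bar>1 - s\<bar> \<le> 1 + s" using s0 by linarith
    also have "\<dots> \<le> (1 + s) * (1 + s)" using s0 by (simp add: algebra_simps)
    finally show ?thesis .
  qed
  moreover have P: "0 < (1 + s) * (1 + s)" using s0 by (simp add: add_pos_nonneg)
  moreover have eq: "dtr c t = (1 - s) / ((1 + s) * (1 + s))" unfolding dtr_def s_def ..
  moreover have "\<bar>(1 + s) * (1 + s)\<bar> = (1 + s) * (1 + s)" using P by linarith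
  ultimately show ?thesis by (simp add: abs_divide divide_le_eq_1_pos)
qed

lemma dtr_cont: "continuous_on UNIV (dtr c)"
proof -
  have nz: "1 + c * c * (t * t) \<noteq> 0" for t using tr_den[of c t] by linarith
  show ?thesis unfolding dtr_def by (intro continuous_intros; use nz in auto)
qed

lemma tr_0: "tr c 0 = 0" by (simp add: tr_def)

lemma tr_bound: assumes c: "0 < c" shows "\<bar>tr c t\<bar> \<le> 1 / c"
proof -
  define x where "x = c * \<bar>t\<bar>"
  have "x \<le> 1 + x * x"
  proof -
    have "0 \<le> (x - 1/2) * (x - 1/2)" by simp
    moreover have "(x - 1/2) * (x - 1/2) = x * x - x + 1/4" by (simp add: algebra_simps)
    ultimately show ?thesis by linarith
  qed
  then have "c * \<bar>t\<bar> \<le> 1 + c * c * (t * t)" unfolding x_def by (simp add: algebra_simps abs_mult_self_eq)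
  then have "\<bar>t\<bar> \<le> (1 + c * c * (t * t)) / c" using c by (simp add: le_divide_eq mult.commute)
  then have "\<bar>t\<bar> / (1 + c * c * (t * t)) \<le> ((1 + c * c * (t * t)) / c) / (1 + c * c * (t * t))"
    using tr_den[of c t] by (intro divide_right_mono) auto
  also have "\<dots> = 1 / c"
  proof -
    have "1 + c * c * (t * t) \<noteq> 0" using tr_den[of c t] by linarith
    then show ?thesis by simp
  qed
  finally have a: "\<bar>t\<bar> / (1 + c * c * (t * t)) \<le> 1 / c" .
  have ad: "\<bar>1 + c * c * (t * t)\<bar> = 1 + c * c * (t * t)" using tr_den[of c t] by linarith
  show ?thesis unfolding tr_def using a by (simp only: abs_divide ad)
qed

lemma tr_diff: "\<bar>t - tr c t\<bar> \<le> \<bar>t\<bar>"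
proof -
  have p: "0 < 1 + c * c * (t * t)" using tr_den[of c t] by linarith
  have "t - tr c t = t * (c * c * (t * t)) / (1 + c * c * (t * t))"
    unfolding tr_def using p by (simp add: field_simps)
  then have "\<bar>t - tr c t\<bar> = \<bar>t\<bar> * (c * c * (t * t)) / (1 + c * c * (t * t))"
    using p by (simp add: abs_mult)
  also have "\<dots> \<le> \<bar>t\<bar>"
  proof -
    have "\<bar>t\<bar> * (c * c * (t * t)) \<le> \<bar>t\<bar> * (1 + c * c * (t * t))"
      by (intro mult_left_mono) auto
    then show ?thesis using p by (simp add: divide_le_eq)
  qed
  finally show ?thesis .
qed

lemma tr_abs: "\<bar>tr c t\<bar> \<le> \<bar>t\<bar>"
proof -
  define d where "d = 1 + c * c * (t * t)"
  have p: "1 \<le> d" unfolding d_def by (rule tr_den)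
  have "\<bar>t\<bar> * 1 \<le> \<bar>t\<bar> * d" using p by (rule mult_left_mono) simp
  then have "\<bar>t\<bar> / d \<le> \<bar>t\<bar>" using p by (simp add: divide_le_eq)
  moreover have ad: "\<bar>d\<bar> = d" using p by simp
  moreover have "tr c t = t / d" unfolding tr_def d_def ..
  ultimately show ?thesis by (simp add: abs_divide)
qed
lemma tr_lim: "(\<lambda>n. tr (epsn n) t) \<longlonglongrightarrow> t"
proof -
  have "(\<lambda>n. t / (1 + epsn n * epsn n * (t * t))) \<longlonglongrightarrow> t / (1 + 0 * 0 * (t * t))"
    by (intro tendsto_intros epsn_lim) auto
  then show ?thesis by (simp add: tr_def)
qed

lemma dtr_lim: "(\<lambda>n. dtr (epsn n) t) \<longlonglongrightarrow> 1"
proof -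
  have "(\<lambda>n. (1 - epsn n * epsn n * (t * t)) / ((1 + epsn n * epsn n * (t * t)) * (1 + epsn n * epsn n * (t * t))))
     \<longlonglongrightarrow> (1 - 0 * 0 * (t * t)) / ((1 + 0 * 0 * (t * t)) * (1 + 0 * 0 * (t * t)))"
    by (intro tendsto_intros epsn_lim) auto
  then show ?thesis by (simp add: dtr_def)
qed

definition cutf :: "real \<Rightarrow> real \<Rightarrow> real" where "cutf a t = qs (a * t - 1)"
definition dcut :: "real \<Rightarrow> real \<Rightarrow> real" where "dcut a t = a * dqs (a * t - 1)"

lemma cut_deriv: "(cutf a has_real_derivative dcut a t) (at t)"
proof -
  have "((\<lambda>t. qs (a * t - 1)) has_real_derivative dqs (a * t - 1) * a) (at t)"
    by (rule DERIV_chain2[OF qs_deriv]) (auto intro!: derivative_eq_intros)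
  then show ?thesis unfolding cutf_def dcut_def by (simp add: mult.commute)
qed

lemma cut_cont: "continuous_on UNIV (cutf a)"
  using cut_deriv by (intro continuous_at_imp_continuous_on) (auto intro: DERIV_isCont)

lemma dcut_cont: "continuous_on UNIV (dcut a)"
proof -
  have "continuous_on UNIV (\<lambda>t. a * dqs (a * t - 1))"
    by (intro continuous_intros continuous_on_compose2[OF dqs_cont]) auto
  then show ?thesis unfolding dcut_def .
qed

lemma cut_bounds: "0 \<le> cutf a t" "cutf a t \<le> 1"
  unfolding cutf_def using qs_bounds by auto

lemma dcut_bound: "0 \<le> a \<Longrightarrow> \<bar>dcut a t\<bar> \<le> 2 * a"
  unfolding dcut_def using dqs_bound[of "a * t - 1"] by (simp add: abs_mult mult_left_mono mult.commute)

lemma cut_0: "0 < a \<Longrightarrow> cutf a 0 = 0" by (simp add: cutf_def qs_le0)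

lemma cut_one: "2 \<le> a * t \<Longrightarrow> cutf a t = 1" by (simp add: cutf_def qs_ge1)
lemma dcut_zero: "2 \<le> a * t \<Longrightarrow> dcut a t = 0" by (simp add: dcut_def dqs_out)
lemma cut_pos: "0 < cutf a t \<Longrightarrow> 1 < a * t"
  unfolding cutf_def using qs_pos by fastforce

context stdg begin

lemma trunc_conv: assumes g: "g \<in> Dom"
  shows "(\<lambda>N. E01 M D (\<lambda>x. g x - tr (epsn N) (g x))) \<longlonglongrightarrow> 0"
proof -
  have gm[measurable]: "g \<in> borel_measurable M" using dom_meas[OF g] .
  have Dgm[measurable]: "D g \<in> borel_measurable M" using dom_Dmeas[OF g] .
  have ch: "(\<lambda>x. tr (epsn N) (g x)) \<in> Dom \<and> (AE x in M. D (\<lambda>x. tr (epsn N) (g x)) x = dtr (epsn N) (g x) *\<^sub>R D g x)" for N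
    using chain1[OF g tr_deriv dtr_cont dtr_bound tr_0] .
  have df: "(\<lambda>x. g x - tr (epsn N) (g x)) \<in> Dom \<and>
     (AE x in M. D (\<lambda>x. g x - tr (epsn N) (g x)) x = D g x - D (\<lambda>x. tr (epsn N) (g x)) x)" for N
    using dom_diff[OF g ch[THEN conjunct1]] .
  have dtrm[measurable]: "(\<lambda>x. dtr c (g x)) \<in> borel_measurable M" for c
    using borel_measurable_continuous_onI[OF dtr_cont] by measurable
  have eq: "integral\<^sup>L M (\<lambda>x. (norm (D (\<lambda>x. g x - tr (epsn N) (g x)) x))\<^sup>2) =
        integral\<^sup>L M (\<lambda>x. (norm ((1 - dtr (epsn N) (g x)) *\<^sub>R D g x))\<^sup>2)" for N
  proof (rule integral_cong_AE)
    show "(\<lambda>x. (norm (D (\<lambda>x. g x - tr (epsn N) (g x)) x))\<^sup>2) \<in> borel_measurable M"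
      using dom_Dmeas[OF df[THEN conjunct1]] by measurable
    show "(\<lambda>x. (norm ((1 - dtr (epsn N) (g x)) *\<^sub>R D g x))\<^sup>2) \<in> borel_measurable M" by measurable
    show "AE x in M. (norm (D (\<lambda>x. g x - tr (epsn N) (g x)) x))\<^sup>2 = (norm ((1 - dtr (epsn N) (g x)) *\<^sub>R D g x))\<^sup>2"
      using df[of N, THEN conjunct2] ch[of N, THEN conjunct2]
      by eventually_elim (simp add: scaleR_diff_left)
  qed
  have I1: "(\<lambda>N. integral\<^sup>L M (\<lambda>x. (norm ((1 - dtr (epsn N) (g x)) *\<^sub>R D g x))\<^sup>2)) \<longlonglongrightarrow> integral\<^sup>L M (\<lambda>x. 0)"
  proof (rule integral_dominated_convergence[where w="\<lambda>x. 4 * (norm (D g x))\<^sup>2"])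
    show "integrable M (\<lambda>x. 4 * (norm (D g x))\<^sup>2)" using dom_Dint[OF g] by simp
    show "AE x in M. (\<lambda>N. (norm ((1 - dtr (epsn N) (g x)) *\<^sub>R D g x))\<^sup>2) \<longlonglongrightarrow> 0"
    proof (rule AE_I2)
      fix x
      have "(\<lambda>N. (norm ((1 - dtr (epsn N) (g x)) *\<^sub>R D g x))\<^sup>2) \<longlonglongrightarrow> (norm ((1 - 1) *\<^sub>R D g x))\<^sup>2"
        by (intro tendsto_intros dtr_lim)
      then show "(\<lambda>N. (norm ((1 - dtr (epsn N) (g x)) *\<^sub>R D g x))\<^sup>2) \<longlonglongrightarrow> 0" by simp
    qed
    show "AE x in M. norm ((norm ((1 - dtr (epsn N) (g x)) *\<^sub>R D g x))\<^sup>2) \<le> 4 * (norm (D g x))\<^sup>2" for N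
    proof (rule AE_I2)
      fix x
      have "\<bar>1 - dtr (epsn N) (g x)\<bar> \<le> 2" using dtr_bound[of "epsn N" "g x"] by linarith
      then have "norm ((1 - dtr (epsn N) (g x)) *\<^sub>R D g x) \<le> 2 * norm (D g x)"
        by (simp add: mult_right_mono)
      then have "(norm ((1 - dtr (epsn N) (g x)) *\<^sub>R D g x))\<^sup>2 \<le> (2 * norm (D g x))\<^sup>2"
        by (intro power_mono) auto
      then show "norm ((norm ((1 - dtr (epsn N) (g x)) *\<^sub>R D g x))\<^sup>2) \<le> 4 * (norm (D g x))\<^sup>2"
        by (simp add: power_mult_distrib)
    qed
  qed measurable
  have I2: "(\<lambda>N. integral\<^sup>L M (\<lambda>x. (g x - tr (epsn N) (g x))\<^sup>2)) \<longlonglongrightarrow> integral\<^sup>L M (\<lambda>x. 0)"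
  proof (rule integral_dominated_convergence[where w="\<lambda>x. (g x)\<^sup>2"])
    show "integrable M (\<lambda>x. (g x)\<^sup>2)" using dom_int[OF g] .
    show "(\<lambda>x. (g x - tr (epsn N) (g x))\<^sup>2) \<in> borel_measurable M" for N
      using dom_meas[OF ch[THEN conjunct1]] by measurable
    show "AE x in M. (\<lambda>N. (g x - tr (epsn N) (g x))\<^sup>2) \<longlonglongrightarrow> 0"
    proof (rule AE_I2)
      fix x
      have "(\<lambda>N. (g x - tr (epsn N) (g x))\<^sup>2) \<longlonglongrightarrow> (g x - g x)\<^sup>2"
        by (intro tendsto_intros tr_lim)
      then show "(\<lambda>N. (g x - tr (epsn N) (g x))\<^sup>2) \<longlonglongrightarrow> 0" by simp
    qed
    show "AE x in M. norm ((g x - tr (epsn N) (g x))\<^sup>2) \<le> (g x)\<^sup>2" for N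
      using tr_diff by (auto simp: abs_le_square_iff)
  qed measurable
  have "(\<lambda>N. 1/2 * integral\<^sup>L M (\<lambda>x. (norm ((1 - dtr (epsn N) (g x)) *\<^sub>R D g x))\<^sup>2) +
              integral\<^sup>L M (\<lambda>x. (g x - tr (epsn N) (g x))\<^sup>2)) \<longlonglongrightarrow> 1/2 * 0 + 0"
    using I1 I2 by (intro tendsto_intros) auto
  then show ?thesis unfolding E01_def eq by simp
qed

end

lemma sq_tendsto_zero: "(\<lambda>j. (a j)\<^sup>2) \<longlonglongrightarrow> 0 \<Longrightarrow> a \<longlonglongrightarrow> (0::real)"
proof -
  assume "(\<lambda>j. (a j)\<^sup>2) \<longlonglongrightarrow> 0"
  then have "(\<lambda>j. sqrt ((a j)\<^sup>2)) \<longlonglongrightarrow> sqrt 0" by (intro tendsto_intros)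
  then have "(\<lambda>j. \<bar>a j\<bar>) \<longlonglongrightarrow> 0" by simp
  then show ?thesis by (simp add: tendsto_rabs_zero_iff)
qed

lemma nsq_tendsto_zero: "(\<lambda>j. (norm (a j))\<^sup>2) \<longlonglongrightarrow> 0 \<Longrightarrow> a \<longlonglongrightarrow> (0::'b::real_normed_vector)"
proof -
  assume "(\<lambda>j. (norm (a j))\<^sup>2) \<longlonglongrightarrow> 0"
  then have "(\<lambda>j. sqrt ((norm (a j))\<^sup>2)) \<longlonglongrightarrow> sqrt 0" by (intro tendsto_intros)
  then have "(\<lambda>j. norm (a j)) \<longlonglongrightarrow> 0" by simp
  then show ?thesis by (simp add: tendsto_norm_zero_iff)
qed

lemma squeeze0: "(\<And>j. 0 \<le> s j) \<Longrightarrow> (\<And>j. s j \<le> v j) \<Longrightarrow> v \<longlonglongrightarrow> 0 \<Longrightarrow> s \<longlonglongrightarrow> (0::real)"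
  by (rule tendsto_sandwich[of "\<lambda>_. 0" _ _ v]) auto

lemma tr_cont: "continuous_on UNIV (tr c)"
  using tr_deriv by (intro continuous_at_imp_continuous_on) (auto intro: DERIV_isCont)

lemma isCont_UNIV: "continuous_on UNIV f \<Longrightarrow> isCont f x"
  by (simp add: continuous_on_eq_continuous_at)

lemma meas_tr[measurable]: "tr c \<in> borel_measurable borel"
  by (rule borel_measurable_continuous_onI[OF tr_cont])
lemma meas_dtr[measurable]: "dtr c \<in> borel_measurable borel"
  by (rule borel_measurable_continuous_onI[OF dtr_cont])
lemma meas_cut[measurable]: "cutf a \<in> borel_measurable borel"
  by (rule borel_measurable_continuous_onI[OF cut_cont])
lemma meas_dcut[measurable]: "dcut a \<in> borel_measurable borel"
  by (rule borel_measurable_continuous_onI[OF dcut_cont])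

context stdg begin

lemma approx:
  assumes g: "g \<in> Dom" and H: "H \<in> Dom"
    and gA: "AE x in M. x \<notin> A \<longrightarrow> g x = 0"
    and HA: "AE x in M. x \<in> A \<longrightarrow> 1 \<le> H x"
    and u: "\<And>j. u j \<in> Dom"
    and uc: "(\<lambda>j. E01 M D (\<lambda>x. H x - u j x)) \<longlonglongrightarrow> 0"
    and c: "0 < c"
    and dl: "0 < \<delta>"
  shows "\<exists>j. E01 M D (\<lambda>x. tr c (g x) - tr c (g x) * cutf 4 (u j x)) < \<delta>"
proof -
  have gm[measurable]: "g \<in> borel_measurable M" using dom_meas[OF g] .
  have Dgm[measurable]: "D g \<in> borel_measurable M" using dom_Dmeas[OF g] .
  have Hm[measurable]: "H \<in> borel_measurable M" using dom_meas[OF H] .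
  have DHm[measurable]: "D H \<in> borel_measurable M" using dom_Dmeas[OF H] .
  have um[measurable]: "u j \<in> borel_measurable M" for j using dom_meas[OF u] .
  have Dum[measurable]: "D (u j) \<in> borel_measurable M" for j using dom_Dmeas[OF u] .
  have dd: "(\<lambda>x. H x - u j x) \<in> Dom \<and> (AE x in M. D (\<lambda>x. H x - u j x) x = D H x - D (u j) x)" for j
    using dom_diff[OF H u] .
  define v where "v = (\<lambda>j x. (H x - u j x)\<^sup>2 + (norm (D H x - D (u j) x))\<^sup>2)"
  have vm[measurable]: "v j \<in> borel_measurable M" for j unfolding v_def by measurable
  have v0: "0 \<le> v j x" for j x unfolding v_def by simp
  have i1: "integrable M (\<lambda>x. (H x - u j x)\<^sup>2)" for j
    using dom_int[OF dd[THEN conjunct1]] by simp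
  have i2: "integrable M (\<lambda>x. (norm (D H x - D (u j) x))\<^sup>2)" for j
  proof (rule integrable_cong_AE_imp[OF dom_Dint[OF dd[of j, THEN conjunct1]]])
    show "(\<lambda>x. (norm (D H x - D (u j) x))\<^sup>2) \<in> borel_measurable M" by measurable
    show "AE x in M. (norm (D (\<lambda>x. H x - u j x) x))\<^sup>2 = (norm (D H x - D (u j) x))\<^sup>2"
      using dd[of j, THEN conjunct2] by eventually_elim simp
  qed
  have iv: "integrable M (v j)" for j unfolding v_def using i1 i2 by simp
  have ie: "integral\<^sup>L M (\<lambda>x. (norm (D H x - D (u j) x))\<^sup>2) = integral\<^sup>L M (\<lambda>x. (norm (D (\<lambda>x. H x - u j x) x))\<^sup>2)" for j
  proof (rule integral_cong_AE)
    show "(\<lambda>x. (norm (D (\<lambda>x. H x - u j x) x))\<^sup>2) \<in> borel_measurable M"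
      using dom_Dmeas[OF dd[of j, THEN conjunct1]] by measurable
    show "AE x in M. (norm (D H x - D (u j) x))\<^sup>2 = (norm (D (\<lambda>x. H x - u j x) x))\<^sup>2"
      using dd[of j, THEN conjunct2] by eventually_elim simp
  qed measurable
  have vle: "integral\<^sup>L M (v j) \<le> 2 * E01 M D (\<lambda>x. H x - u j x)" for j
  proof -
    have "integral\<^sup>L M (v j) = integral\<^sup>L M (\<lambda>x. (H x - u j x)\<^sup>2) + integral\<^sup>L M (\<lambda>x. (norm (D H x - D (u j) x))\<^sup>2)"
      unfolding v_def using i1 i2 by simp
    moreover have "0 \<le> integral\<^sup>L M (\<lambda>x. (H x - u j x)\<^sup>2)" by simp
    ultimately show ?thesis unfolding E01_def ie by simp
  qed
  have vlim: "(\<lambda>j. integral\<^sup>L M (v j)) \<longlonglongrightarrow> 0"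
  proof (rule squeeze0)
    show "0 \<le> integral\<^sup>L M (v j)" for j using v0 by simp
    show "integral\<^sup>L M (v j) \<le> 2 * E01 M D (\<lambda>x. H x - u j x)" for j by (rule vle)
    show "(\<lambda>j. 2 * E01 M D (\<lambda>x. H x - u j x)) \<longlonglongrightarrow> 0"
      using tendsto_mult_right_zero[OF uc, of 2] by simp
  qed
  have "\<exists>r::nat\<Rightarrow>nat. strict_mono r \<and> (AE x in M. (\<lambda>n. v (r n) x) \<longlonglongrightarrow> 0)"
  proof (rule tendsto_L1_AE_subseq)
    show "integrable M (v n)" for n by (rule iv)
    show "(\<lambda>n. \<integral>x. norm (v n x) \<partial>M) \<longlonglongrightarrow> 0" using vlim v0 by simp
  qed
  then obtain r :: "nat \<Rightarrow> nat" where r: "strict_mono r" and rv: "AE x in M. (\<lambda>n. v (r n) x) \<longlonglongrightarrow> 0"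
    by blast
  define w where "w = (\<lambda>j. u (r j))"
  have wD: "w j \<in> Dom" for j unfolding w_def by (rule u)
  have wm[measurable]: "w j \<in> borel_measurable M" for j unfolding w_def by measurable
  have Dwm[measurable]: "D (w j) \<in> borel_measurable M" for j unfolding w_def by measurable
  have wconv: "AE x in M. (\<lambda>j. w j x) \<longlonglongrightarrow> H x"
    using rv
  proof eventually_elim
    case (elim x)
    have "(\<lambda>j. (H x - w j x)\<^sup>2) \<longlonglongrightarrow> 0"
      by (rule squeeze0[OF _ _ elim]) (auto simp: v_def w_def)
    then have "(\<lambda>j. H x - w j x) \<longlonglongrightarrow> 0" by (rule sq_tendsto_zero)
    then have "(\<lambda>j. H x - (H x - w j x)) \<longlonglongrightarrow> H x - 0" by (intro tendsto_intros)
    then show ?case by simp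
  qed
  have Aint_lim: "(\<lambda>j. integral\<^sup>L M (\<lambda>x. (norm (D (w j) x - D H x))\<^sup>2)) \<longlonglongrightarrow> 0"
  proof (rule squeeze0)
    show "0 \<le> integral\<^sup>L M (\<lambda>x. (norm (D (w j) x - D H x))\<^sup>2)" for j by simp
    show "integral\<^sup>L M (\<lambda>x. (norm (D (w j) x - D H x))\<^sup>2) \<le> integral\<^sup>L M (v (r j))" for j
      unfolding w_def using i2[of "r j"] iv[of "r j"]
      by (intro integral_mono) (auto simp: v_def norm_minus_commute)
    show "(\<lambda>j. integral\<^sup>L M (v (r j))) \<longlonglongrightarrow> 0"
      using LIMSEQ_subseq_LIMSEQ[OF vlim r] by (simp add: o_def)
  qed
  have Aint: "integrable M (\<lambda>x. (norm (D (w j) x - D H x))\<^sup>2)" for j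
    using i2[of "r j"] unfolding w_def by (simp add: norm_minus_commute)
  define B0 where "B0 = 1 / c + 8"
  have trb: "\<bar>tr c t\<bar> \<le> B0" for t using tr_bound[OF c, of t] unfolding B0_def by linarith
  have B8: "8 \<le> B0" using c unfolding B0_def by simp
  have dtrb: "\<bar>dtr c t\<bar> \<le> B0" for t using dtr_bound[of c t] B8 by linarith
  have cutb: "\<bar>cutf 4 t\<bar> \<le> B0" for t using cut_bounds[of 4 t] B8 by linarith
  have dcutb: "\<bar>dcut 4 t\<bar> \<le> B0" for t using dcut_bound[of 4 t] B8 by linarith
  have chT: "(\<lambda>x. tr c (g x)) \<in> Dom \<and> (AE x in M. D (\<lambda>x. tr c (g x)) x = dtr c (g x) *\<^sub>R D g x)"
    using chain1[OF g tr_deriv dtr_cont dtr_bound tr_0] .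
  have chP: "(\<lambda>x. tr c (g x) * cutf 4 (w j x)) \<in> Dom \<and>
     (AE x in M. D (\<lambda>x. tr c (g x) * cutf 4 (w j x)) x =
        (dtr c (g x) * cutf 4 (w j x)) *\<^sub>R D g x + (tr c (g x) * dcut 4 (w j x)) *\<^sub>R D (w j) x)" for j
    using chain2[OF g wD tr_deriv dtr_cont cut_deriv dcut_cont trb dtrb cutb dcutb tr_0] .
  define e where "e = (\<lambda>j x. tr c (g x) - tr c (g x) * cutf 4 (w j x))"
  have ed: "e j \<in> Dom \<and> (AE x in M. D (e j) x = D (\<lambda>x. tr c (g x)) x - D (\<lambda>x. tr c (g x) * cutf 4 (w j x)) x)" for j
    unfolding e_def using dom_diff[OF chT[THEN conjunct1] chP[of j, THEN conjunct1]] .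
  define K where "K = 8 / c"
  have K0: "0 \<le> K" using c unfolding K_def by simp
  have tdb: "\<bar>tr c s * dcut 4 t\<bar> \<le> K" for s t
  proof -
    have "\<bar>tr c s * dcut 4 t\<bar> = \<bar>tr c s\<bar> * \<bar>dcut 4 t\<bar>" by (simp add: abs_mult)
    also have "\<dots> \<le> (1 / c) * 8"
      using tr_bound[OF c, of s] dcut_bound[of 4 t] c by (intro mult_mono) auto
    finally show ?thesis unfolding K_def by simp
  qed
  define B where "B = (\<lambda>j x. ((1 - cutf 4 (w j x)) * dtr c (g x)) *\<^sub>R D g x - (tr c (g x) * dcut 4 (w j x)) *\<^sub>R D H x)"
  have Bm[measurable]: "(\<lambda>x. (norm (B j x))\<^sup>2) \<in> borel_measurable M" for j unfolding B_def by measurable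
  have Dem: "AE x in M. norm (D (e j) x) \<le> K * norm (D (w j) x - D H x) + norm (B j x)" for j
    using ed[of j, THEN conjunct2] chT[THEN conjunct2] chP[of j, THEN conjunct2]
  proof eventually_elim
    case (elim x)
    have "D (e j) x = B j x - (tr c (g x) * dcut 4 (w j x)) *\<^sub>R (D (w j) x - D H x)"
      unfolding elim B_def by (simp add: algebra_simps)
    also have "norm \<dots> \<le> norm (B j x) + norm ((tr c (g x) * dcut 4 (w j x)) *\<^sub>R (D (w j) x - D H x))"
      by (rule norm_triangle_ineq4)
    also have "\<dots> \<le> norm (B j x) + K * norm (D (w j) x - D H x)"
      using tdb by (simp add: mult_right_mono)
    finally show ?case by simp
  qed
  have Desq: "AE x in M. (norm (D (e j) x))\<^sup>2 \<le> 2 * (K\<^sup>2 * (norm (D (w j) x - D H x))\<^sup>2) + 2 * (norm (B j x))\<^sup>2" for j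
    using Dem[of j]
  proof eventually_elim
    case (elim x)
    have "(norm (D (e j) x))\<^sup>2 \<le> (K * norm (D (w j) x - D H x) + norm (B j x))\<^sup>2"
      using elim by (intro power_mono) auto
    also have "\<dots> \<le> 2 * (K * norm (D (w j) x - D H x))\<^sup>2 + 2 * (norm (B j x))\<^sup>2" by (rule sq_tri)
    finally show ?case by (simp add: power_mult_distrib)
  qed
  define W where "W = (\<lambda>x. 2 * (norm (D g x))\<^sup>2 + 2 * (K\<^sup>2 * (norm (D H x))\<^sup>2))"
  have Wint: "integrable M W" unfolding W_def using dom_Dint[OF g] dom_Dint[OF H] by simp
  have Bbound: "norm ((norm (B j x))\<^sup>2) \<le> W x" for j x
  proof -
    have a: "\<bar>(1 - cutf 4 (w j x)) * dtr c (g x)\<bar> \<le> 1"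
    proof -
      have "\<bar>(1 - cutf 4 (w j x)) * dtr c (g x)\<bar> = \<bar>1 - cutf 4 (w j x)\<bar> * \<bar>dtr c (g x)\<bar>" by (simp add: abs_mult)
      also have "\<dots> \<le> 1 * 1" using cut_bounds[of 4 "w j x"] dtr_bound[of c "g x"] by (intro mult_mono) auto
      finally show ?thesis by simp
    qed
    have "norm (B j x) \<le> norm (((1 - cutf 4 (w j x)) * dtr c (g x)) *\<^sub>R D g x) + norm ((tr c (g x) * dcut 4 (w j x)) *\<^sub>R D H x)"
      unfolding B_def by (rule norm_triangle_ineq4)
    also have "\<dots> \<le> norm (D g x) + K * norm (D H x)"
    proof (rule add_mono)
      have "\<bar>(1 - cutf 4 (w j x)) * dtr c (g x)\<bar> * norm (D g x) \<le> 1 * norm (D g x)"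
        by (rule mult_right_mono[OF a]) simp
      then show "norm (((1 - cutf 4 (w j x)) * dtr c (g x)) *\<^sub>R D g x) \<le> norm (D g x)" by simp
      have "\<bar>tr c (g x) * dcut 4 (w j x)\<bar> * norm (D H x) \<le> K * norm (D H x)"
        by (rule mult_right_mono[OF tdb]) simp
      then show "norm ((tr c (g x) * dcut 4 (w j x)) *\<^sub>R D H x) \<le> K * norm (D H x)" by simp
    qed
    finally have "(norm (B j x))\<^sup>2 \<le> (norm (D g x) + K * norm (D H x))\<^sup>2"
      by (intro power_mono) auto
    also have "\<dots> \<le> 2 * (norm (D g x))\<^sup>2 + 2 * (K * norm (D H x))\<^sup>2" by (rule sq_tri)
    finally show ?thesis unfolding W_def by (simp add: power_mult_distrib)
  qed
  have Bint: "integrable M (\<lambda>x. (norm (B j x))\<^sup>2)" for j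
  proof (rule Bochner_Integration.integrable_bound[OF Wint])
    show "AE x in M. norm ((norm (B j x))\<^sup>2) \<le> norm (W x)"
    proof (rule AE_I2)
      fix x
      show "norm ((norm (B j x))\<^sup>2) \<le> norm (W x)"
        using Bbound[of j x] abs_ge_self[of "W x"] by simp
    qed
  qed measurable
  have loc: "AE x in M. g x = 0 \<longrightarrow> D g x = 0" by (rule locality[OF g])
  have Blim: "(\<lambda>j. integral\<^sup>L M (\<lambda>x. (norm (B j x))\<^sup>2)) \<longlonglongrightarrow> integral\<^sup>L M (\<lambda>x. 0)"
  proof (rule integral_dominated_convergence[OF _ _ Wint])
    show "AE x in M. norm ((norm (B j x))\<^sup>2) \<le> W x" for j using Bbound by simp
    show "AE x in M. (\<lambda>j. (norm (B j x))\<^sup>2) \<longlonglongrightarrow> 0"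
      using wconv gA HA loc
    proof eventually_elim
      case (elim x)
      have l: "(\<lambda>j. B j x) \<longlonglongrightarrow> ((1 - cutf 4 (H x)) * dtr c (g x)) *\<^sub>R D g x - (tr c (g x) * dcut 4 (H x)) *\<^sub>R D H x"
        unfolding B_def
        by (intro tendsto_intros isCont_tendsto_compose[OF isCont_UNIV[OF cut_cont] elim(1)]
              isCont_tendsto_compose[OF isCont_UNIV[OF dcut_cont] elim(1)])
      have z: "((1 - cutf 4 (H x)) * dtr c (g x)) *\<^sub>R D g x - (tr c (g x) * dcut 4 (H x)) *\<^sub>R D H x = 0"
      proof (cases "x \<in> A")
        case True
        then have "2 \<le> 4 * H x" using elim(3) by simp
        then show ?thesis by (simp add: cut_one dcut_zero)
      next
        case False
        then show ?thesis using elim(2,4) by (simp add: tr_0)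
      qed
      have "(\<lambda>j. (norm (B j x))\<^sup>2) \<longlonglongrightarrow> (norm (0::'h))\<^sup>2"
        using l unfolding z by (intro tendsto_intros)
      then show ?case by simp
    qed
  qed measurable
  have em[measurable]: "(\<lambda>x. (e j x)\<^sup>2) \<in> borel_measurable M" for j unfolding e_def by measurable
  have elim0: "(\<lambda>j. integral\<^sup>L M (\<lambda>x. (e j x)\<^sup>2)) \<longlonglongrightarrow> integral\<^sup>L M (\<lambda>x. 0)"
  proof (rule integral_dominated_convergence[where w="\<lambda>x. (g x)\<^sup>2"])
    show "integrable M (\<lambda>x. (g x)\<^sup>2)" using dom_int[OF g] .
    show "AE x in M. norm ((e j x)\<^sup>2) \<le> (g x)\<^sup>2" for j
    proof (rule AE_I2)
      fix x
      have "e j x = tr c (g x) * (1 - cutf 4 (w j x))" unfolding e_def by (simp add: algebra_simps)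
      then have "\<bar>e j x\<bar> = \<bar>tr c (g x)\<bar> * \<bar>1 - cutf 4 (w j x)\<bar>" by (simp add: abs_mult)
      also have "\<dots> \<le> \<bar>g x\<bar> * 1" using tr_abs[of c "g x"] cut_bounds[of 4 "w j x"] by (intro mult_mono) auto
      finally show "norm ((e j x)\<^sup>2) \<le> (g x)\<^sup>2" by (simp add: abs_le_square_iff)
    qed
    show "AE x in M. (\<lambda>j. (e j x)\<^sup>2) \<longlonglongrightarrow> 0"
      using wconv gA HA
    proof eventually_elim
      case (elim x)
      have l: "(\<lambda>j. (e j x)\<^sup>2) \<longlonglongrightarrow> (tr c (g x) - tr c (g x) * cutf 4 (H x))\<^sup>2"
        unfolding e_def
        by (intro tendsto_intros isCont_tendsto_compose[OF isCont_UNIV[OF cut_cont] elim(1)])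
      have z: "(tr c (g x) - tr c (g x) * cutf 4 (H x))\<^sup>2 = 0"
      proof (cases "x \<in> A")
        case True
        then have "2 \<le> 4 * H x" using elim(3) by simp
        then show ?thesis by (simp add: cut_one)
      next
        case False
        then show ?thesis using elim(2) by (simp add: tr_0)
      qed
      show ?case using l unfolding z .
    qed
  qed measurable
  have Eb: "E01 M D (e j) \<le> K\<^sup>2 * integral\<^sup>L M (\<lambda>x. (norm (D (w j) x - D H x))\<^sup>2) +
       integral\<^sup>L M (\<lambda>x. (norm (B j x))\<^sup>2) + integral\<^sup>L M (\<lambda>x. (e j x)\<^sup>2)" for j
  proof -
    have "integral\<^sup>L M (\<lambda>x. (norm (D (e j) x))\<^sup>2) \<le>
        integral\<^sup>L M (\<lambda>x. 2 * (K\<^sup>2 * (norm (D (w j) x - D H x))\<^sup>2) + 2 * (norm (B j x))\<^sup>2)"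
      using Desq[of j] dom_Dint[OF ed[of j, THEN conjunct1]] Aint[of j] Bint[of j]
      by (intro integral_mono_AE) auto
    also have "\<dots> = 2 * (K\<^sup>2 * integral\<^sup>L M (\<lambda>x. (norm (D (w j) x - D H x))\<^sup>2)) + 2 * integral\<^sup>L M (\<lambda>x. (norm (B j x))\<^sup>2)"
      using Aint[of j] Bint[of j] by simp
    finally show ?thesis unfolding E01_def by simp
  qed
  have "(\<lambda>j. K\<^sup>2 * integral\<^sup>L M (\<lambda>x. (norm (D (w j) x - D H x))\<^sup>2) +
       integral\<^sup>L M (\<lambda>x. (norm (B j x))\<^sup>2) + integral\<^sup>L M (\<lambda>x. (e j x)\<^sup>2)) \<longlonglongrightarrow> K\<^sup>2 * 0 + 0 + 0"
    using Aint_lim Blim elim0 by (intro tendsto_intros) auto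
  then have "(\<lambda>j. E01 M D (e j)) \<longlonglongrightarrow> 0"
    by (intro squeeze0[OF E01_nonneg Eb]) simp
  then have "eventually (\<lambda>j. E01 M D (e j) < \<delta>) sequentially"
    using dl by (rule order_tendstoD)
  then obtain j where "E01 M D (e j) < \<delta>" by (auto simp: eventually_sequentially)
  then show ?thesis unfolding e_def w_def by blast
qed

end

context stdg begin

lemma prod_dom: assumes g: "g \<in> Dom" and u: "u \<in> Dom" and c: "0 < c"
  shows "(\<lambda>x. tr c (g x) * cutf 4 (u x)) \<in> Dom"
proof -
  define B0 where "B0 = 1 / c + 8"
  have trb: "\<bar>tr c t\<bar> \<le> B0" for t using tr_bound[OF c, of t] unfolding B0_def by linarith
  have B8: "8 \<le> B0" using c unfolding B0_def by simp
  have dtrb: "\<bar>dtr c t\<bar> \<le> B0" for t using dtr_bound[of c t] B8 by linarith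
  have cutb: "\<bar>cutf 4 t\<bar> \<le> B0" for t using cut_bounds[of 4 t] B8 by linarith
  have dcutb: "\<bar>dcut 4 t\<bar> \<le> B0" for t using dcut_bound[of 4 t] B8 by linarith
  show ?thesis
    using chain2[OF g u tr_deriv dtr_cont cut_deriv dcut_cont trb dtrb cutb dcutb tr_0] by blast
qed

end

theorem mainTheorem12:
  fixes M :: "'a measure" and Dom :: "('a \<Rightarrow> real) set"
    and D :: "('a \<Rightarrow> real) \<Rightarrow> ('a \<Rightarrow> 'h::{real_inner,banach,second_countable_topology})"
    and Es :: "nat \<Rightarrow> 'a set"
  assumes "standing M Dom D"
    and "measurable_nest M Dom D Es"
  shows "\<exists>Ehat chi. measurable_nest M Dom D Ehat \<and>
           (\<forall>k. Ehat k \<subseteq> Es k \<and> chi k \<in> Dom \<and>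
                (AE x in M. 0 \<le> chi k x \<and> chi k x \<le> 1) \<and>
                (AE x in M. x \<in> Ehat k \<longrightarrow> chi k x = 1) \<and>
                (AE x in M. x \<notin> Es k \<longrightarrow> chi k x = 0))"
proof -
  interpret stdg M Dom D by (rule stdg.intro[OF assms(1)])
  have inc: "incseq Es" and EsM: "\<And>k. Es k \<in> sets M"
    and hk: "\<forall>k. \<exists>h\<in>Dom. AE x in M. x \<in> Es k \<longrightarrow> 1 \<le> h x"
    and dens: "\<forall>f\<in>Dom. \<forall>\<epsilon>>0. \<exists>k. \<exists>g\<in>Dom_on M Dom (Es k). E01 M D (\<lambda>x. f x - g x) < \<epsilon>"
    using assms(2) unfolding measurable_nest_def by auto
  from hk obtain H where H: "\<And>k. H k \<in> Dom" and HE: "\<And>k. AE x in M. x \<in> Es k \<longrightarrow> 1 \<le> H k x"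
    by metis
  have ex: "\<forall>i. \<exists>m u. u \<in> Dom_on M Dom (Es m) \<and>
      E01 M D (\<lambda>x. H (fst (prod_decode i)) x - u x) < 1 / real (Suc (snd (prod_decode i)))"
  proof
    fix i
    have "0 < 1 / real (Suc (snd (prod_decode i)))" by simp
    then show "\<exists>m u. u \<in> Dom_on M Dom (Es m) \<and>
      E01 M D (\<lambda>x. H (fst (prod_decode i)) x - u x) < 1 / real (Suc (snd (prod_decode i)))"
      using dens H by blast
  qed
  then obtain mI U where U: "\<And>i. U i \<in> Dom_on M Dom (Es (mI i))"
    and UE: "\<And>i. E01 M D (\<lambda>x. H (fst (prod_decode i)) x - U i x) < 1 / real (Suc (snd (prod_decode i)))"
    by metis
  have UD: "U i \<in> Dom" for i using U[of i] unfolding Dom_on_def by auto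
  have Uz: "AE x in M. x \<notin> Es (mI i) \<longrightarrow> U i x = 0" for i using U[of i] unfolding Dom_on_def by auto
  define Csm where "Csm = (\<lambda>i x. cutf 8 (U i x))"
  have CsmD: "Csm i \<in> Dom" for i
    unfolding Csm_def using chain1[OF UD cut_deriv dcut_cont dcut_bound cut_0] by simp
  have Csm0: "0 \<le> Csm i x" for i x unfolding Csm_def using cut_bounds by simp
  define Ik where "Ik = (\<lambda>k. {i. i < k \<and> mI i \<le> k})"
  have Ikf: "finite (Ik k)" for k unfolding Ik_def by (rule finite_subset[of _ "{..<k}"]) auto
  define Sig where "Sig = (\<lambda>k x. \<Sum>i\<in>Ik k. Csm i x)"
  have SigD: "Sig k \<in> Dom" for k unfolding Sig_def by (rule dom_sum[OF Ikf CsmD])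
  have Sigm[measurable]: "Sig k \<in> borel_measurable M" for k by (rule dom_meas[OF SigD])
  have Sig0: "0 \<le> Sig k x" for k x unfolding Sig_def using Csm0 by (simp add: sum_nonneg)
  define Ehat where "Ehat = (\<lambda>k. {x\<in>space M. 1 \<le> Sig k x} \<inter> Es k)"
  define chi where "chi = (\<lambda>k x. cutf 2 (Sig k x))"
  have chiD: "chi k \<in> Dom" for k
    unfolding chi_def using chain1[OF SigD cut_deriv dcut_cont dcut_bound cut_0] by simp
  have EsMono: "m \<le> k \<Longrightarrow> Es m \<subseteq> Es k" for m k using inc by (simp add: incseq_def)
  have part2: "\<forall>k. Ehat k \<subseteq> Es k \<and> chi k \<in> Dom \<and>
                (AE x in M. 0 \<le> chi k x \<and> chi k x \<le> 1) \<and>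
                (AE x in M. x \<in> Ehat k \<longrightarrow> chi k x = 1) \<and>
                (AE x in M. x \<notin> Es k \<longrightarrow> chi k x = 0)"
  proof (intro allI conjI)
    fix k
    show "Ehat k \<subseteq> Es k" unfolding Ehat_def by auto
    show "chi k \<in> Dom" by (rule chiD)
    show "AE x in M. 0 \<le> chi k x \<and> chi k x \<le> 1" unfolding chi_def using cut_bounds by simp
    show "AE x in M. x \<in> Ehat k \<longrightarrow> chi k x = 1"
    proof (rule AE_I2, rule impI)
      fix x assume "x \<in> Ehat k"
      then have "2 \<le> 2 * Sig k x" unfolding Ehat_def by auto
      then show "chi k x = 1" unfolding chi_def by (rule cut_one)
    qed
    have "AE x in M. \<forall>i\<in>Ik k. x \<notin> Es (mI i) \<longrightarrow> U i x = 0"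
      using Ikf Uz by (simp add: AE_finite_all)
    then show "AE x in M. x \<notin> Es k \<longrightarrow> chi k x = 0"
    proof eventually_elim
      case (elim x)
      show ?case
      proof
        assume xn: "x \<notin> Es k"
        have "Csm i x = 0" if "i \<in> Ik k" for i
        proof -
          have "mI i \<le> k" using that unfolding Ik_def by auto
          then have "x \<notin> Es (mI i)" using xn EsMono by blast
          then have "U i x = 0" using elim that by blast
          then show ?thesis unfolding Csm_def by (simp add: cut_0)
        qed
        then have "Sig k x = 0" unfolding Sig_def by simp
        then show "chi k x = 0" unfolding chi_def by (simp add: cut_0)
      qed
    qed
  qed
  have Ehat_inc: "incseq Ehat"
  proof (rule incseq_SucI)
    fix k
    have "Sig k x \<le> Sig (Suc k) x" for x
      unfolding Sig_def
      by (rule sum_mono2[OF Ikf]) (auto simp: Ik_def Csm0)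
    then show "Ehat k \<subseteq> Ehat (Suc k)"
      unfolding Ehat_def using EsMono[of k "Suc k"] by (auto intro: order_trans)
  qed
  have EhatM: "Ehat k \<in> sets M" for k
  proof -
    have "{x\<in>space M. 1 \<le> Sig k x} \<in> sets M" by measurable
    then show ?thesis unfolding Ehat_def using EsM by auto
  qed
  have Ehat_h: "\<forall>k. \<exists>h\<in>Dom. AE x in M. x \<in> Ehat k \<longrightarrow> 1 \<le> h x"
  proof
    fix k
    have "AE x in M. x \<in> Ehat k \<longrightarrow> 1 \<le> H k x"
      using HE[of k] by eventually_elim (auto simp: Ehat_def)
    then show "\<exists>h\<in>Dom. AE x in M. x \<in> Ehat k \<longrightarrow> 1 \<le> h x" using H by blast
  qed
  have Ehat_dens: "\<forall>f\<in>Dom. \<forall>\<epsilon>>0. \<exists>k. \<exists>p\<in>Dom_on M Dom (Ehat k). E01 M D (\<lambda>x. f x - p x) < \<epsilon>"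
  proof (intro ballI allI impI)
    fix f :: "'a \<Rightarrow> real" and \<epsilon> :: real
    assume f: "f \<in> Dom" and ep: "0 < \<epsilon>"
    obtain n g where gD0: "g \<in> Dom_on M Dom (Es n)" and fg: "E01 M D (\<lambda>x. f x - g x) < \<epsilon> / 8"
      using dens f ep by (metis divide_pos_pos zero_less_numeral)
    have g: "g \<in> Dom" and gz: "AE x in M. x \<notin> Es n \<longrightarrow> g x = 0" using gD0 unfolding Dom_on_def by auto
    have "eventually (\<lambda>N. E01 M D (\<lambda>x. g x - tr (epsn N) (g x)) < \<epsilon> / 16) sequentially"
      using trunc_conv[OF g] ep by (intro order_tendstoD) auto
    then obtain N where gT: "E01 M D (\<lambda>x. g x - tr (epsn N) (g x)) < \<epsilon> / 16"
      by (auto simp: eventually_sequentially)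
    define c where "c = epsn N"
    have c: "0 < c" unfolding c_def by (rule epsn_pos)
    define u where "u = (\<lambda>j. U (prod_encode (n, j)))"
    have uD: "u j \<in> Dom" for j unfolding u_def by (rule UD)
    have uc: "(\<lambda>j. E01 M D (\<lambda>x. H n x - u j x)) \<longlonglongrightarrow> 0"
    proof (rule squeeze0)
      show "0 \<le> E01 M D (\<lambda>x. H n x - u j x)" for j by (rule E01_nonneg)
      show "E01 M D (\<lambda>x. H n x - u j x) \<le> inverse (real (Suc j))" for j
        using UE[of "prod_encode (n, j)"] unfolding u_def by (simp add: divide_inverse)
      show "(\<lambda>j. inverse (real (Suc j))) \<longlonglongrightarrow> 0" by (rule LIMSEQ_inverse_real_of_nat)
    qed
    obtain j where ej: "E01 M D (\<lambda>x. tr c (g x) - tr c (g x) * cutf 4 (u j x)) < \<epsilon> / 16"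
      using approx[OF g H[of n] gz HE[of n] uD uc c, of "\<epsilon> / 16"] ep by auto
    define i where "i = prod_encode (n, j)"
    define k where "k = max (Suc i) (mI i)"
    define p where "p = (\<lambda>x. tr c (g x) * cutf 4 (U i x))"
    have pD: "p \<in> Dom" unfolding p_def by (rule prod_dom[OF g UD c])
    have TD: "(\<lambda>x. tr c (g x)) \<in> Dom"
      using chain1[OF g tr_deriv dtr_cont dtr_bound tr_0] by blast
    have iI: "i \<in> Ik k" unfolding Ik_def k_def by auto
    have pz: "AE x in M. x \<notin> Ehat k \<longrightarrow> p x = 0"
      using Uz[of i] AE_space
    proof eventually_elim
      case (elim x)
      show ?case
      proof (rule ccontr)
        assume "\<not> (x \<notin> Ehat k \<longrightarrow> p x = 0)"
        then have xn: "x \<notin> Ehat k" and px: "p x \<noteq> 0" by auto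
        have "cutf 4 (U i x) \<noteq> 0" using px unfolding p_def by auto
        then have "0 < cutf 4 (U i x)" using cut_bounds[of 4 "U i x"] by linarith
        then have U1: "1 < 4 * U i x" by (rule cut_pos)
        then have "U i x \<noteq> 0" by auto
        then have "x \<in> Es (mI i)" using elim by blast
        then have xE: "x \<in> Es k" using EsMono[of "mI i" k] unfolding k_def by auto
        have "Csm i x = 1" unfolding Csm_def using U1 by (intro cut_one) simp
        then have "1 \<le> Sig k x" unfolding Sig_def
          using member_le_sum[OF iI, of "\<lambda>i. Csm i x"] Csm0 Ikf by simp
        then have "x \<in> Ehat k" using xE elim unfolding Ehat_def by auto
        then show False using xn by contradiction
      qed
    qed
    have pE: "p \<in> Dom_on M Dom (Ehat k)" unfolding Dom_on_def using pD pz by auto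
    have e1: "E01 M D (\<lambda>x. tr c (g x) - p x) < \<epsilon> / 16"
      using ej unfolding p_def u_def i_def by simp
    have e2: "E01 M D (\<lambda>x. g x - tr c (g x)) < \<epsilon> / 16" using gT unfolding c_def .
    have t1: "E01 M D (\<lambda>x. f x - p x) \<le> 2 * E01 M D (\<lambda>x. f x - g x) + 2 * E01 M D (\<lambda>x. g x - p x)"
      by (rule E01_tri[OF f g pD])
    have t2: "E01 M D (\<lambda>x. g x - p x) \<le> 2 * E01 M D (\<lambda>x. g x - tr c (g x)) + 2 * E01 M D (\<lambda>x. tr c (g x) - p x)"
      using E01_tri[OF g TD pD] by simp
    define q where "q = \<epsilon> / 16"
    have q1: "\<epsilon> / 16 = q" "\<epsilon> / 8 = 2 * q" "\<epsilon> = 16 * q" unfolding q_def by simp_all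
    have "E01 M D (\<lambda>x. f x - p x) < \<epsilon>" using t1 t2 e1 e2 fg q1(3) ep unfolding q1(1) q1(2) by linarith
    then show "\<exists>k. \<exists>p\<in>Dom_on M Dom (Ehat k). E01 M D (\<lambda>x. f x - p x) < \<epsilon>" using pE by blast
  qed
  have "measurable_nest M Dom D Ehat"
    unfolding measurable_nest_def using Ehat_inc EhatM Ehat_h Ehat_dens by blast
  then show ?thesis using part2 by blast
qed


end
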